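(* Let $q(x,y)=ax^2+bxy+cy^2$ with $a,b,c\in\mathbb{Z}$ be a positive definite binary quadratic form (so $\Delta(q)=b^2-4ac<0$ and $a>0$), and let $k\in\mathbb{Z}$. Then the equation $q(x,y)=k$ has at most $4$ solutions $(x,y)\in\mathbb{Z}^2$ satisfying $$|x|\le\frac{|k|^{1/4}}{\sqrt{-\Delta(q)}}.$$ *)

theory Defs
  imports "HOL-Analysis.Analysis"
begin

end

theory Submission
  imports Defs
begin

lemma int_le_sq: "0 \<le> (t::int) \<Longrightarrow> t \<le> t^2"
proof (cases "t = 0")
  case False
  assume "0 \<le> t"
  hence "1 \<le> t" using False by simp
  hence "t * 1 \<le> t * t" using \<open>0 \<le> t\<close> by (intro mult_left_mono) auto
  thus ?thesis by (simp add: power2_eq_square)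
qed simp

lemma core_int:
  fixes v1 v2 P1 P2 c k :: int
  assumes "v1^2 + P1 = 4*c*k" "v2^2 + P2 = 4*c*k"
    "0 \<le> P1" "0 \<le> P2" "P1^2 \<le> k" "P2^2 \<le> k" "v1 > 0" "v2 > 0" "c \<ge> 1" "k \<ge> 1"
  shows "P1 = P2 \<and> v1 = v2"
proof (rule ccontr)
  assume ne: "\<not> (P1 = P2 \<and> v1 = v2)"
  have hne: "v1 \<noteq> v2" using ne assms(1,2) by auto
  have id: "(v1-v2)*(v1+v2) = P2 - P1" using assms(1,2) by (simp add: power2_eq_square algebra_simps)
  have d1: "(v1-v2)^2 \<ge> 1" using hne
    by (metis add_0 diff_eq_diff_eq diff_self int_one_le_iff_zero_less zero_less_power2)
  have pk1: "P1 \<le> k" using assms(3,5) int_le_sq[of P1] by linarith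
  have pk2: "P2 \<le> k" using assms(4,6) int_le_sq[of P2] by linarith
  have "4*c*k \<ge> 4*k" using assms(9,10) by simp
  moreover have "v1 * v2 > 0" using assms(7,8) by simp
  moreover have "(v1+v2)^2 = v1^2 + v2^2 + 2*(v1 * v2)" by (simp add: power2_eq_square algebra_simps)
  ultimately have s: "(v1+v2)^2 \<ge> 6*k" using assms(1,2) pk1 pk2 by linarith
  have "(P2-P1)^2 \<le> k"
  proof (cases "P1 \<le> P2")
    case True
    hence "(P2-P1)^2 \<le> P2^2" using assms(3) by (intro power_mono) auto
    thus ?thesis using assms(6) by simp
  next
    case False
    hence "(P2-P1)^2 = (P1-P2)^2" by (simp add: power2_commute)
    also have "\<dots> \<le> P1^2" using False assms(4) by (intro power_mono) auto
    finally show ?thesis using assms(5) by simp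
  qed
  moreover have "(P2-P1)^2 = (v1-v2)^2 * (v1+v2)^2" using id by (metis power_mult_distrib)
  moreover have "(v1-v2)^2 * (v1+v2)^2 \<ge> 1 * (v1+v2)^2" using d1 by (intro mult_right_mono) auto
  ultimately show False using s assms(10) by linarith
qed

lemma real_bound:
  fixes x k D :: int
  assumes "D > 0" "real_of_int \<bar>x\<bar> \<le> real_of_int \<bar>k\<bar> powr (1/4) / sqrt (real_of_int D)"
  shows "(D*x^2)^2 \<le> \<bar>k\<bar>"
proof -
  have sD: "sqrt (real_of_int D) > 0" using assms(1) by simp
  have h: "real_of_int \<bar>x\<bar> * sqrt (real_of_int D) \<le> real_of_int \<bar>k\<bar> powr (1/4)"
    using assms(2) sD by (simp add: pos_le_divide_eq)
  have "(real_of_int \<bar>x\<bar> * sqrt (real_of_int D))^4 \<le> (real_of_int \<bar>k\<bar> powr (1/4))^4"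
    using h assms(1) by (intro power_mono) auto
  also have "\<dots> = real_of_int \<bar>k\<bar>"
  proof (cases "k = 0")
    case True thus ?thesis by simp
  next
    case False
    hence "(real_of_int \<bar>k\<bar> powr (1/4))^4 = real_of_int \<bar>k\<bar> powr (real 4 * (1/4))"
      by (subst powr_power) auto
    thus ?thesis by simp
  qed
  also have "(real_of_int \<bar>x\<bar> * sqrt (real_of_int D))^4 = real_of_int ((D*x^2)^2)"
  proof -
    have "(real_of_int \<bar>x\<bar> * sqrt (real_of_int D))^4
        = (real_of_int \<bar>x\<bar>)^4 * (sqrt (real_of_int D))^2 * (sqrt (real_of_int D))^2"
      by (simp add: power_mult_distrib flip: power_add)
    also have "\<dots> = (real_of_int x)^4 * real_of_int D * real_of_int D"
      using assms(1) by (simp add: power_even_abs)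
    finally show ?thesis by (simp add: power2_eq_square power4_eq_xxxx)
  qed
  finally show ?thesis by linarith
qed

lemma le2_lemma:
  fixes A :: "'a set" and f :: "'a \<Rightarrow> int"
  assumes "\<And>p q. p \<in> A \<Longrightarrow> q \<in> A \<Longrightarrow> f p ^ 2 = f q ^ 2"
    and "\<And>p q. p \<in> A \<Longrightarrow> q \<in> A \<Longrightarrow> f p = f q \<Longrightarrow> p = q"
  shows "finite A \<and> card A \<le> 2"
proof (cases "A = {}")
  case True thus ?thesis by simp
next
  case False
  then obtain p0 where p0: "p0 \<in> A" by auto
  show ?thesis
  proof (cases "\<exists>p1\<in>A. f p1 \<noteq> f p0")
    case True
    then obtain p1 where p1: "p1 \<in> A" "f p1 \<noteq> f p0" by auto
    have "A \<subseteq> {p0, p1}"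
    proof
      fix p assume p: "p \<in> A"
      have e0: "f p ^ 2 = f p0 ^ 2" "f p1 ^ 2 = f p0 ^ 2"
        using assms(1)[OF p p0] assms(1)[OF p1(1) p0] by simp_all
      hence dj: "f p = f p0 \<or> f p = - f p0" and m1: "f p1 = - f p0" using p1(2)
        by (auto simp: power2_eq_iff)
      from dj show "p \<in> {p0, p1}"
      proof
        assume "f p = f p0" thus ?thesis using assms(2)[OF p p0] by simp
      next
        assume "f p = - f p0" hence "f p = f p1" using m1 by simp
        thus ?thesis using assms(2)[OF p p1(1)] by simp
      qed
    qed
    moreover have "card {p0, p1} \<le> 2" by (simp add: card_insert_if)
    moreover have "finite {p0, p1}" by simp
    ultimately show ?thesis using card_mono[of "{p0,p1}" A] finite_subset by fastforce
  next
    case False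
    have "A \<subseteq> {p0}"
    proof
      fix p assume p: "p \<in> A"
      hence "f p = f p0" using False by auto
      thus "p \<in> {p0}" using assms(2)[OF p p0] by simp
    qed
    thus ?thesis using card_mono[of "{p0}" A] finite_subset by fastforce
  qed
qed

theorem lemma1:
  fixes a b c k :: int
  assumes "b^2 - 4*a*c < 0" and "a > 0"
  shows "finite {(x::int, y::int). a*x^2 + b*x*y + c*y^2 = k \<and>
                 real_of_int \<bar>x\<bar> \<le> real_of_int \<bar>k\<bar> powr (1/4) / sqrt (- real_of_int (b^2 - 4*a*c))}
       \<and> card {(x::int, y::int). a*x^2 + b*x*y + c*y^2 = k \<and>
                 real_of_int \<bar>x\<bar> \<le> real_of_int \<bar>k\<bar> powr (1/4) / sqrt (- real_of_int (b^2 - 4*a*c))} \<le> 4"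
proof -
  define S where "S = {(x::int, y::int). a*x^2 + b*x*y + c*y^2 = k \<and>
                 real_of_int \<bar>x\<bar> \<le> real_of_int \<bar>k\<bar> powr (1/4) / sqrt (- real_of_int (b^2 - 4*a*c))}"
  define D where "D = 4*a*c - b^2"
  have Dpos: "D > 0" using assms(1) by (simp add: D_def)
  have cpos: "c > 0"
  proof (rule ccontr)
    assume "\<not> c > 0"
    hence "a*c \<le> 0" using assms(2) by (simp add: mult_nonneg_nonpos)
    moreover have "b^2 \<ge> 0" by simp
    ultimately show False using Dpos unfolding D_def by linarith
  qed
  define u where "u = (\<lambda>p::int\<times>int. 2*c* snd p + b*fst p)"
  have sq: "sqrt (- real_of_int (b^2 - 4*a*c)) = sqrt (real_of_int D)" by (simp add: D_def)
  have mem: "p \<in> S \<Longrightarrow> u p ^ 2 + D * fst p ^ 2 = 4*c*k \<and> (D * fst p ^ 2)^2 \<le> \<bar>k\<bar>" for p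
  proof -
    assume "p \<in> S"
    obtain x y where p: "p = (x,y)" by fastforce
    have q: "a*x^2 + b*x*y + c*y^2 = k"
      and r: "real_of_int \<bar>x\<bar> \<le> real_of_int \<bar>k\<bar> powr (1/4) / sqrt (real_of_int D)"
      using \<open>p \<in> S\<close> unfolding S_def p sq by auto
    have "u p ^ 2 + D * fst p ^ 2 = 4*c*(a*x^2 + b*x*y + c*y^2)"
      by (simp add: p u_def D_def power2_eq_square algebra_simps)
    thus ?thesis using q real_bound[OF Dpos r] p by simp
  qed
  have "finite S \<and> card S \<le> 4"
  proof (cases "k \<ge> 1")
    case False
    have "S \<subseteq> {(0,0)}"
    proof
      fix p assume pS: "p \<in> S"
      have e: "u p ^ 2 + D * fst p ^ 2 = 4*c*k" using mem[OF pS] by simp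
      have "u p ^ 2 \<ge> 0" "D * fst p ^ 2 \<ge> 0" using Dpos by auto
      hence "4*c*k \<ge> 0" using e by linarith
      hence "k \<ge> 0" using cpos by (simp add: zero_le_mult_iff)
      hence "k = 0" using False by simp
      hence "u p ^ 2 + D * fst p ^ 2 = 0" using e by simp
      hence "u p ^ 2 = 0" "D * fst p ^ 2 = 0" using \<open>u p ^ 2 \<ge> 0\<close> \<open>D * fst p ^ 2 \<ge> 0\<close> by linarith+
      hence "fst p = 0" "u p = 0" using Dpos by auto
      hence "snd p = 0" using cpos by (simp add: u_def)
      thus "p \<in> {(0,0)}" using \<open>fst p = 0\<close> by (cases p) auto
    qed
    thus ?thesis using card_mono[of "{(0,0)}" S] finite_subset by fastforce
  next
    case True
    have key: "fst p ^ 2 = fst q ^ 2 \<and> u p = u q"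
      if "p \<in> S" "q \<in> S" "s * u p > 0" "s * u q > 0" "s = 1 \<or> s = -1" for p q s
    proof -
      have s2: "(s * t)^2 = t^2" for t using that(5) by auto
      have e1: "(s * u p)^2 + D * fst p ^ 2 = 4*c*k" "(D * fst p ^ 2)^2 \<le> k"
        using mem[OF that(1)] True s2 by auto
      have e2: "(s * u q)^2 + D * fst q ^ 2 = 4*c*k" "(D * fst q ^ 2)^2 \<le> k"
        using mem[OF that(2)] True s2 by auto
      have "D * fst p ^ 2 = D * fst q ^ 2 \<and> s * u p = s * u q"
        by (rule core_int[OF e1(1) e2(1) _ _ e1(2) e2(2) that(3,4)]) (use Dpos cpos True in auto)
      thus ?thesis using Dpos that(5) by auto
    qed
    define A where "A = (\<lambda>s. {p\<in>S. s * u p > 0})"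
    have fA: "finite (A s) \<and> card (A s) \<le> 2" if "s = 1 \<or> s = -1" for s
    proof (rule le2_lemma[where f=fst])
      fix p q assume "p \<in> A s" "q \<in> A s"
      thus "fst p ^ 2 = fst q ^ 2" using key that unfolding A_def by blast
    next
      fix p q assume "p \<in> A s" "q \<in> A s" "fst p = fst q"
      hence "u p = u q" using key that unfolding A_def by blast
      hence "snd p = snd q" using \<open>fst p = fst q\<close> cpos by (simp add: u_def)
      thus "p = q" using \<open>fst p = fst q\<close> by (simp add: prod_eq_iff)
    qed
    have "S \<subseteq> A 1 \<union> A (-1)"
    proof
      fix p assume pS: "p \<in> S"
      have e: "u p ^ 2 + D * fst p ^ 2 = 4*c*k" "(D * fst p ^ 2)^2 \<le> k" using mem[OF pS] True by auto
      have "D * fst p ^ 2 \<le> (D * fst p ^ 2)^2" using Dpos by (intro int_le_sq) simp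
      moreover have "4*c*k \<ge> 4*k" using cpos True by simp
      ultimately have "u p ^ 2 > 0" using e True by linarith
      hence "u p \<noteq> 0" by auto
      thus "p \<in> A 1 \<union> A (-1)" using pS unfolding A_def by auto
    qed
    moreover have "finite (A 1 \<union> A (-1))" using fA by auto
    moreover have "card (A 1 \<union> A (-1)) \<le> 4"
      using card_Un_le[of "A 1" "A (-1)"] fA[of 1] fA[of "-1"] by auto
    ultimately show ?thesis by (meson card_mono finite_subset le_trans)
  qed
  thus ?thesis unfolding S_def .
qed

end
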